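(* For $n>2$ and $1<k<n$, in $G=H_B(n,k)$: (1) the periphery $P(G)=\{v: e(v)=\mathrm{diam}(G)\}$ equals the set of all $r$-vertices of $V_2$ with $1\le r<n$; (2) the centre $C(G)=\{v: e(v)=\mathrm{rad}(G)\}$ equals the set of all $n$-vertices (which all lie in $V_2$).
   Context: Fix integers $n\ge 2$ and $1\le k<n$ and positive real numbers $x_1<x_2<\dots<x_n$. Let $\mathscr{B}_n=\{\pm x_1,\pm x_2,\dots,\pm x_{n-1},x_n\}$ (so $-x_n\notin\mathscr{B}_n$). Let $\phi(\mathscr{B}_n)$ be the family of all nonempty subsets $S\subseteq\mathscr{B}_n$ whose elements have pairwise distinct absolute values and whose element of largest absolute value is positive. Let $\mathscr{B}_n^+=\{x_1,\dots,x_n\}$, let $V_1$ be the set of all $k$-element subsets of $\mathscr{B}_n^+$, and let $V_2=\phi(\mathscr{B}_n)\setminus V_1$. For $A\in\phi(\mathscr{B}_n)$ put $A^\dagger=\{|a|:a\in A\}$. The bipartite Kneser B type-$k$ graph $H_B(n,k)$ is the simple graph with vertex set $V_1\cup V_2$ in which $X\in V_1$ and $Y\in V_2$ are adjacent if and only if $X\subseteq Y^\dagger$ or $Y^\dagger\subseteq X$, and there are no other edges. An $r$-vertex is a vertex having exactly $r$ elements. $e(v)$ denotes eccentricity. *)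

theory Defs
  imports Main "HOL-Library.Extended_Nat"
begin

text \<open>A simple graph is given by a vertex set V and a set E of (ordered) adjacent pairs,
  assumed symmetric. Distances take values in enat (infinite if unreachable).\<close>

definition gdist :: "('a \<times> 'a) set \<Rightarrow> 'a \<Rightarrow> 'a \<Rightarrow> enat" where
  "gdist E u v = Inf {enat m | m. (u, v) \<in> E ^^ m}"

definition ecc :: "'a set \<Rightarrow> ('a \<times> 'a) set \<Rightarrow> 'a \<Rightarrow> enat" where
  "ecc V E v = (SUP u\<in>V. gdist E v u)"

definition diam :: "'a set \<Rightarrow> ('a \<times> 'a) set \<Rightarrow> enat" where
  "diam V E = (SUP v\<in>V. ecc V E v)"

definition rad :: "'a set \<Rightarrow> ('a \<times> 'a) set \<Rightarrow> enat" where
  "rad V E = (INF v\<in>V. ecc V E v)"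

definition periphery :: "'a set \<Rightarrow> ('a \<times> 'a) set \<Rightarrow> 'a set" where
  "periphery V E = {v \<in> V. ecc V E v = diam V E}"

definition centre :: "'a set \<Rightarrow> ('a \<times> 'a) set \<Rightarrow> 'a set" where
  "centre V E = {v \<in> V. ecc V E v = rad V E}"

text \<open>x :: nat \<Rightarrow> real gives x_1 < ... < x_n (indices 1..n).\<close>

definition Bn :: "(nat \<Rightarrow> real) \<Rightarrow> nat \<Rightarrow> real set" where
  "Bn x n = {x i | i. 1 \<le> i \<and> i < n} \<union> {- x i | i. 1 \<le> i \<and> i < n} \<union> {x n}"

definition Bn_plus :: "(nat \<Rightarrow> real) \<Rightarrow> nat \<Rightarrow> real set" where
  "Bn_plus x n = {x i | i. 1 \<le> i \<and> i \<le> n}"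

definition phi :: "real set \<Rightarrow> real set set" where
  "phi B = {S. S \<noteq> {} \<and> S \<subseteq> B \<and> inj_on abs S \<and>
              (\<forall>a\<in>S. (\<forall>b\<in>S. \<bar>b\<bar> \<le> \<bar>a\<bar>) \<longrightarrow> a > 0)}"

definition HB_V1 :: "(nat \<Rightarrow> real) \<Rightarrow> nat \<Rightarrow> nat \<Rightarrow> real set set" where
  "HB_V1 x n k = {S. S \<subseteq> Bn_plus x n \<and> card S = k}"

definition HB_V2 :: "(nat \<Rightarrow> real) \<Rightarrow> nat \<Rightarrow> nat \<Rightarrow> real set set" where
  "HB_V2 x n k = phi (Bn x n) - HB_V1 x n k"

definition HB_V :: "(nat \<Rightarrow> real) \<Rightarrow> nat \<Rightarrow> nat \<Rightarrow> real set set" where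
  "HB_V x n k = HB_V1 x n k \<union> HB_V2 x n k"

definition HB_adj1 :: "real set \<Rightarrow> real set \<Rightarrow> bool" where
  "HB_adj1 X Y \<longleftrightarrow> X \<subseteq> abs ` Y \<or> abs ` Y \<subseteq> X"

definition HB_E :: "(nat \<Rightarrow> real) \<Rightarrow> nat \<Rightarrow> nat \<Rightarrow> (real set \<times> real set) set" where
  "HB_E x n k = {(X, Y) | X Y. X \<in> HB_V1 x n k \<and> Y \<in> HB_V2 x n k \<and> HB_adj1 X Y}
              \<union> {(Y, X) | X Y. X \<in> HB_V1 x n k \<and> Y \<in> HB_V2 x n k \<and> HB_adj1 X Y}"

end

theory Submission imports Defs begin


lemma gdist_le: "(u,v) \<in> E ^^ m \<Longrightarrow> gdist E u v \<le> enat m"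
  unfolding gdist_def by (rule Inf_lower) blast

lemma gdist_ge: "(\<And>m. m < d \<Longrightarrow> (u,v) \<notin> E ^^ m) \<Longrightarrow> enat d \<le> gdist E u v"
  unfolding gdist_def by (rule Inf_greatest) (auto simp: not_less[symmetric])

lemma rel2: "(u,v) \<in> E ^^ 2 \<longleftrightarrow> (\<exists>w. (u,w)\<in>E \<and> (w,v)\<in>E)"
  by (auto simp: numeral_2_eq_2 relcomp_unfold)
lemma rel3: "(u,v) \<in> E ^^ 3 \<longleftrightarrow> (\<exists>a b. (u,a)\<in>E \<and> (a,b)\<in>E \<and> (b,v)\<in>E)"
  by (auto simp: numeral_3_eq_3 relcomp_unfold)
lemma rel4: "(u,v) \<in> E ^^ 4 \<longleftrightarrow> (\<exists>a b c. (u,a)\<in>E \<and> (a,b)\<in>E \<and> (b,c)\<in>E \<and> (c,v)\<in>E)"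
  by (simp add: numeral_eq_Suc relcomp_unfold) blast

lemma less4: "(m::nat) < 4 \<Longrightarrow> m = 0 \<or> m = 1 \<or> m = 2 \<or> m = 3" by auto
lemma less3: "(m::nat) < 3 \<Longrightarrow> m = 0 \<or> m = 1 \<or> m = 2" by auto
lemma less2: "(m::nat) < 2 \<Longrightarrow> m = 0 \<or> m = 1" by auto

lemma choose_B:
  assumes "finite U" "A \<subseteq> U" "card A < card U" "A \<noteq> {}" "0 < k" "k < card U"
  shows "\<exists>B\<subseteq>U. card B = k \<and> \<not> B \<subseteq> A \<and> \<not> A \<subseteq> B"
proof (cases "k \<le> card A")
  case True
  have "A \<noteq> U" using assms(3) by auto
  then obtain j where j: "j \<in> U" "j \<notin> A" using assms(2) by blast
  obtain C where C: "C \<subseteq> A" "card C = k - 1" "finite C"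
    using True obtain_subset_with_card_n[of "k-1" A] by force
  have fA: "finite A" using assms(1,2) finite_subset by blast
  have jC: "j \<notin> C" using C j by blast
  let ?B = "insert j C"
  have cB: "card ?B = k" using C jC assms(5) by simp
  moreover have "\<not> ?B \<subseteq> A" using j by blast
  moreover have "\<not> A \<subseteq> ?B"
  proof
    assume "A \<subseteq> ?B"
    then have "A = ?B" using card_seteq[of ?B A] C cB True by simp
    then show False using j by blast
  qed
  moreover have "?B \<subseteq> U" using j C assms(2) by blast
  ultimately show ?thesis by blast
next
  case False
  obtain a where a: "a \<in> A" using assms(4) by blast
  have "card (U - {a}) = card U - 1" using a assms(1,2) by (simp add: subsetD)
  then have "k \<le> card (U - {a})" using assms(6) by simp
  then obtain B where B: "B \<subseteq> U - {a}" "card B = k" "finite B"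
    using obtain_subset_with_card_n by metis
  have "\<not> B \<subseteq> A"
  proof
    assume "B \<subseteq> A"
    moreover have "finite A" using assms(1,2) finite_subset by blast
    ultimately have "card B \<le> card A" by (simp add: card_mono)
    then show False using False B by simp
  qed
  moreover have "\<not> A \<subseteq> B" using a B by blast
  ultimately show ?thesis using B by blast
qed




locale hb =
  fixes x :: "nat \<Rightarrow> real" and n k :: nat
  assumes n2: "n > 2" and k1: "1 < k" and kn: "k < n"
    and pos: "\<And>i. 1 \<le> i \<Longrightarrow> i \<le> n \<Longrightarrow> x i > 0"
    and mono: "strict_mono_on {1..n} x"
begin

abbreviation "P \<equiv> Bn_plus x n"
abbreviation "V1 \<equiv> HB_V1 x n k"
abbreviation "V2 \<equiv> HB_V2 x n k"
abbreviation "V \<equiv> HB_V x n k"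
abbreviation "E \<equiv> HB_E x n k"

lemma P_eq: "P = x ` {1..n}" by (auto simp: Bn_plus_def)
end



context hb begin

lemma finite_P: "finite P" by (simp add: P_eq)
lemma card_P: "card P = n"
  using strict_mono_on_imp_inj_on[OF mono] by (simp add: P_eq card_image)
lemma P_pos: "a \<in> P \<Longrightarrow> a > 0" using pos by (auto simp: Bn_plus_def)
lemma P_sub_Bn: "P \<subseteq> Bn x n"
proof
  fix a assume "a \<in> P"
  then obtain i where i: "1 \<le> i" "i \<le> n" "a = x i" by (auto simp: Bn_plus_def)
  show "a \<in> Bn x n"
  proof (cases "i = n")
    case True then show ?thesis using i by (simp add: Bn_def)
  next
    case False then have "i < n" using i by simp
    then have "a \<in> {x i | i. 1 \<le> i \<and> i < n}" using i by blast
    then show ?thesis unfolding Bn_def by blast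
  qed
qed
lemma Bn_abs: assumes "a \<in> Bn x n" shows "\<bar>a\<bar> \<in> P"
proof -
  from assms have "\<exists>i. 1 \<le> i \<and> i \<le> n \<and> (a = x i \<or> a = - x i)"
    unfolding Bn_def
  proof (elim UnE)
    assume "a \<in> {x n}" then show ?thesis using n2 by (intro exI[of _ n]) auto
  qed auto
  then obtain i where i: "1 \<le> i" "i \<le> n" "a = x i \<or> a = - x i" by blast
  then have "x i > 0" using pos by simp
  then have "\<bar>a\<bar> = x i" using i by auto
  then show ?thesis using i unfolding Bn_plus_def by blast
qed
lemma finite_Bn: "finite (Bn x n)"
proof -
  have "Bn x n \<subseteq> P \<union> uminus ` P" 
  proof
    fix a assume "a \<in> Bn x n"
    then have "\<bar>a\<bar> \<in> P" by (rule Bn_abs)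
    show "a \<in> P \<union> uminus ` P"
    proof (cases "a \<ge> 0")
      case True then show ?thesis using \<open>\<bar>a\<bar> \<in> P\<close> by simp
    next
      case False then have "- a \<in> P" using \<open>\<bar>a\<bar> \<in> P\<close> by simp
      then have "- (- a) \<in> uminus ` P" by (rule imageI)
      then show ?thesis by simp
    qed
  qed
  then show ?thesis using finite_P finite_subset by blast
qed
end


context hb begin
lemma phi_props:
  assumes "Y \<in> phi (Bn x n)"
  shows "finite Y" "Y \<noteq> {}" "abs ` Y \<subseteq> P" "card (abs ` Y) = card Y" "Y \<subseteq> Bn x n"
  using assms finite_Bn finite_subset Bn_abs unfolding phi_def
  by (auto simp: card_image)

lemma V1_props:
  assumes "X \<in> V1" shows "finite X" "X \<subseteq> P" "card X = k"
  using assms finite_P finite_subset unfolding HB_V1_def by auto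

lemma V2_phi: "Y \<in> V2 \<Longrightarrow> Y \<in> phi (Bn x n)" by (simp add: HB_V2_def)
lemma V2_notV1: "Y \<in> V2 \<Longrightarrow> Y \<notin> V1" by (simp add: HB_V2_def)
lemma V_iff: "v \<in> V \<longleftrightarrow> v \<in> V1 \<or> v \<in> V2" by (simp add: HB_V_def)

lemma E_iff: "(a,b) \<in> E \<longleftrightarrow> (a \<in> V1 \<and> b \<in> V2 \<and> HB_adj1 a b) \<or> (b \<in> V1 \<and> a \<in> V2 \<and> HB_adj1 b a)"
  by (auto simp: HB_E_def)

lemma card_V2: "Y \<in> V2 \<Longrightarrow> 1 \<le> card Y \<and> card Y \<le> n"
proof -
  assume "Y \<in> V2"
  then have Y: "Y \<in> phi (Bn x n)" by (rule V2_phi)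
  have "card (abs ` Y) \<le> card P" using phi_props[OF Y] finite_P card_mono by metis
  moreover have "1 \<le> card Y" using phi_props[OF Y] by (simp add: Suc_le_eq card_gt_0_iff)
  ultimately show ?thesis using phi_props[OF Y] card_P by simp
qed

lemma N_V2: "P \<in> V2"
proof -
  have "P \<noteq> {}" using card_P n2 by auto
  moreover have "inj_on abs P" by (intro inj_onI) (metis P_pos abs_of_pos)
  moreover have "P \<in> phi (Bn x n)"
    using calculation P_sub_Bn P_pos unfolding phi_def by auto
  moreover have "P \<notin> V1" using card_P kn by (simp add: HB_V1_def)
  ultimately show ?thesis by (simp add: HB_V2_def)
qed

lemma single_V2: "{x 1} \<in> V2" "card {x 1} = 1"
proof -
  have "x 1 \<in> P" using n2 by (auto simp: Bn_plus_def)
  then have "{x 1} \<in> phi (Bn x n)" using P_sub_Bn P_pos unfolding phi_def by auto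
  moreover have "{x 1} \<notin> V1" using k1 by (simp add: HB_V1_def)
  ultimately show "{x 1} \<in> V2" by (simp add: HB_V2_def)
  show "card {x 1} = 1" by simp
qed

lemma nbr: assumes "Y \<in> V2" shows "\<exists>X\<in>V1. HB_adj1 X Y"
proof -
  have Y: "Y \<in> phi (Bn x n)" using assms by (rule V2_phi)
  note pp = phi_props[OF Y]
  show ?thesis
  proof (cases "k \<le> card (abs ` Y)")
    case True
    then obtain X where "X \<subseteq> abs ` Y" "card X = k" using obtain_subset_with_card_n by metis
    then show ?thesis using pp unfolding HB_V1_def HB_adj1_def by blast
  next
    case False
    then obtain X where "abs ` Y \<subseteq> X" "X \<subseteq> P" "card X = k"
      using exists_subset_between[of "abs ` Y" k P] pp card_P kn finite_P by auto
    then show ?thesis unfolding HB_V1_def HB_adj1_def by blast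
  qed
qed

lemma full_adj: assumes "Y \<in> V2" "card Y = n" "X \<in> V1" shows "HB_adj1 X Y"
proof -
  have Y: "Y \<in> phi (Bn x n)" using assms by (intro V2_phi)
  note pp = phi_props[OF Y]
  have "abs ` Y = P" using card_subset_eq[OF finite_P pp(3)] pp(4) assms(2) card_P by simp
  then show ?thesis using V1_props[OF assms(3)] by (simp add: HB_adj1_def)
qed

lemma adj_pendant:
  assumes "Y \<in> V2" "card Y = k" "X \<in> V1" "HB_adj1 X Y" shows "X = abs ` Y"
proof -
  have Y: "Y \<in> phi (Bn x n)" using assms by (intro V2_phi)
  note pp = phi_props[OF Y]
  note vv = V1_props[OF assms(3)]
  have fA: "finite (abs ` Y)" using pp by simp
  show ?thesis using assms(4) unfolding HB_adj1_def
  proof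
    assume "X \<subseteq> abs ` Y" then show ?thesis using card_subset_eq[OF fA] pp vv assms(2) by simp
  next
    assume a: "abs ` Y \<subseteq> X"
    have "abs ` Y = X" using card_subset_eq[OF vv(1) a] pp vv assms(2) by simp
    then show ?thesis by simp
  qed
qed

lemma pendant:
  assumes B: "B \<subseteq> P" "card B = k" shows "\<exists>Y\<in>V2. abs ` Y = B \<and> card Y = k"
proof -
  have fB: "finite B" using B finite_P finite_subset by blast
  have Bne: "B \<noteq> {}" using B k1 by auto
  define m where "m = Min B"
  have mB: "m \<in> B" using fB Bne m_def by simp
  have mle: "\<And>b. b \<in> B \<Longrightarrow> m \<le> b" using fB m_def by simp
  have "card (B - {m}) = k - 1" using mB fB B by simp
  then have "card (B - {m}) \<noteq> 0" using k1 by simp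
  then have "B - {m} \<noteq> {}" by (metis card.empty)
  then obtain b where b: "b \<in> B" "b \<noteq> m" by blast
  have mb: "m < b" using mle[OF b(1)] b(2) by simp
  obtain i where i: "1 \<le> i" "i \<le> n" "m = x i" using mB B(1) by (auto simp: Bn_plus_def)
  obtain j where j: "1 \<le> j" "j \<le> n" "b = x j" using b B(1) by (auto simp: Bn_plus_def)
  have "x j \<le> x n" using j mono strict_mono_on_leD[OF mono] by auto
  then have "i \<noteq> n" using mb i j by auto
  then have mneg: "- m \<in> Bn x n" using i unfolding Bn_def by auto
  have mpos: "m > 0" using P_pos mB B by blast
  define Y where "Y = insert (- m) (B - {m})"
  have absY: "abs ` Y = B"
  proof -
    have "abs ` (B - {m}) = B - {m}" using P_pos B(1) by (force simp: image_iff)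
    then show ?thesis using mpos mB unfolding Y_def by auto
  qed
  have injY: "inj_on abs Y"
  proof -
    have "inj_on abs (B - {m})" using B(1) by (intro inj_onI) (metis P_pos abs_of_pos Diff_subset subsetD)
    moreover have "\<bar>- m\<bar> \<notin> abs ` (B - {m})" using P_pos B(1) mpos by (force)
    moreover have "- m \<notin> B - {m}" using P_pos B(1) mpos by force
    ultimately show ?thesis unfolding Y_def by simp
  qed
  have YBn: "Y \<subseteq> Bn x n" using mneg P_sub_Bn B(1) unfolding Y_def by blast
  have maxpos: "\<forall>a\<in>Y. (\<forall>c\<in>Y. \<bar>c\<bar> \<le> \<bar>a\<bar>) \<longrightarrow> a > 0"
  proof (intro ballI impI)
    fix a assume a: "a \<in> Y" "\<forall>c\<in>Y. \<bar>c\<bar> \<le> \<bar>a\<bar>"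
    show "a > 0"
    proof (cases "a = - m")
      case True
      have "b \<in> Y" using b unfolding Y_def by simp
      then have "\<bar>b\<bar> \<le> \<bar>a\<bar>" using a by blast
      then show ?thesis using True mb mpos by simp
    next
      case False then have "a \<in> B" using a unfolding Y_def by auto
      then show ?thesis using P_pos B(1) by blast
    qed
  qed
  have "Y \<in> phi (Bn x n)" unfolding phi_def using injY YBn maxpos Y_def by auto
  moreover have "Y \<notin> V1"
  proof
    assume "Y \<in> V1" then have "- m \<in> P" unfolding HB_V1_def Y_def by auto
    then show False using P_pos mpos by force
  qed
  ultimately have "Y \<in> V2" by (simp add: HB_V2_def)
  moreover have "card Y = k" using phi_props(4)[OF \<open>Y \<in> phi _\<close>] absY B by simp
  ultimately show ?thesis using absY by blast
qed

end



lemma ecc_ge: "v \<in> V \<Longrightarrow> gdist E u v \<le> ecc V E u"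
  unfolding ecc_def by (rule SUP_upper)
lemma ecc_le: "(\<And>v. v \<in> V \<Longrightarrow> gdist E u v \<le> b) \<Longrightarrow> ecc V E u \<le> b"
  unfolding ecc_def by (rule SUP_least)

context hb begin

lemma E_from1: "(a,b) \<in> E \<Longrightarrow> a \<in> V1 \<Longrightarrow> b \<in> V2"
  using E_iff V2_notV1 by blast
lemma E_from2: "(a,b) \<in> E \<Longrightarrow> a \<in> V2 \<Longrightarrow> b \<in> V1"
  using E_iff V2_notV1 by blast
lemma absP: "abs ` P = P"
  using P_pos by (force simp: image_iff)
lemma XP: "X \<in> V1 \<Longrightarrow> (X, P) \<in> E" "X \<in> V1 \<Longrightarrow> (P, X) \<in> E"
  using E_iff N_V2 V1_props absP unfolding HB_adj1_def by auto

lemma ecc_V1: assumes X: "X \<in> V1" shows "ecc V E X = enat 3"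
proof (rule antisym)
  show "ecc V E X \<le> enat 3"
  proof (rule ecc_le)
    fix u assume "u \<in> V"
    then consider "u \<in> V1" | "u \<in> V2" using V_iff by blast
    then show "gdist E X u \<le> enat 3"
    proof cases
      case 1
      have "(X,u) \<in> E ^^ 2" unfolding rel2 using XP(1)[OF X] XP(2)[OF 1] by blast
      then have "gdist E X u \<le> enat 2" by (rule gdist_le)
      then show ?thesis by (simp add: order_trans)
    next
      case 2
      then obtain X' where X': "X' \<in> V1" "HB_adj1 X' u" using nbr by blast
      then have "(X',u) \<in> E" using 2 unfolding E_iff by blast
      then have "(X,u) \<in> E ^^ 3" unfolding rel3 using XP(1)[OF X] XP(2)[OF X'(1)] by blast
      then show ?thesis by (rule gdist_le)
    qed
  qed
next
  note vv = V1_props[OF X]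
  have Xne: "X \<noteq> {}" using vv k1 by auto
  have cX: "card X < card P" using vv card_P kn by simp
  have k0: "0 < k" "k < card P" using k1 kn card_P by auto
  from choose_B[OF finite_P vv(2) cX Xne k0] obtain B where
    B: "B \<subseteq> P" "card B = k" "\<not> B \<subseteq> X" "\<not> X \<subseteq> B" by blast
  from pendant[OF B(1,2)] obtain Y where Y0: "Y \<in> V2" "abs ` Y = B \<and> card Y = k" by blast
  then have Y: "Y \<in> V2" "abs ` Y = B" "card Y = k" by auto
  have YV1: "Y \<notin> V1" using V2_notV1[OF Y(1)] .
  have YV: "Y \<in> V" using Y(1) by (simp add: V_iff)
  have "enat 3 \<le> gdist E X Y"
  proof (rule gdist_ge)
    fix m :: nat assume "m < 3"
    then consider "m = 0" | "m = 1" | "m = 2" by linarith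
    then show "(X, Y) \<notin> E ^^ m"
    proof cases
      case 1 then show ?thesis using YV1 X by auto
    next
      case 2
      show ?thesis
      proof
        assume "(X,Y) \<in> E ^^ m"
        then have "(X,Y) \<in> E" using 2 by simp
        then have "HB_adj1 X Y" unfolding E_iff using YV1 by blast
        then have "X = B" using adj_pendant[OF Y(1) Y(3) X] Y(2) by simp
        then show False using B by blast
      qed
    next
      case 3
      show ?thesis
      proof
        assume "(X,Y) \<in> E ^^ m"
        then have "(X,Y) \<in> E ^^ 2" using 3 by simp
        then obtain w where w: "(X,w) \<in> E" "(w,Y) \<in> E" unfolding rel2 by blast
        have "w \<in> V2" using E_from1[OF w(1) X] .
        then have "Y \<in> V1" using E_from2[OF w(2)] by blast
        then show False using YV1 by blast
      qed
    qed
  qed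
  also have "\<dots> \<le> ecc V E X" using YV by (rule ecc_ge)
  finally show "enat 3 \<le> ecc V E X" .
qed

lemma ecc_full: assumes Y: "Y \<in> V2" "card Y = n" shows "ecc V E Y = enat 2"
proof (rule antisym)
  show "ecc V E Y \<le> enat 2"
  proof (rule ecc_le)
    fix u assume "u \<in> V"
    then consider "u \<in> V1" | "u \<in> V2" using V_iff by blast
    then show "gdist E Y u \<le> enat 2"
    proof cases
      case 1
      have "HB_adj1 u Y" using full_adj[OF Y 1] .
      then have "(Y,u) \<in> E" using 1 Y(1) unfolding E_iff by blast
      then have "(Y,u) \<in> E ^^ 1" by simp
      then have "gdist E Y u \<le> enat 1" by (rule gdist_le)
      then show ?thesis by (simp add: order_trans)
    next
      case 2
      from nbr[OF 2] obtain X' where X': "X' \<in> V1" "HB_adj1 X' u" by blast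
      then have "(X',u) \<in> E" using 2 unfolding E_iff by blast
      moreover have "(Y,X') \<in> E" using full_adj[OF Y X'(1)] X'(1) Y(1) unfolding E_iff by blast
      ultimately have "(Y,u) \<in> E ^^ 2" unfolding rel2 by blast
      then show ?thesis by (rule gdist_le)
    qed
  qed
next
  have ne: "Y \<noteq> {x 1}" using Y n2 by auto
  have s1: "{x 1} \<notin> V1" using V2_notV1[OF single_V2(1)] .
  have "enat 2 \<le> gdist E Y {x 1}"
  proof (rule gdist_ge)
    fix m :: nat assume "m < 2"
    then consider "m = 0" | "m = 1" by linarith
    then show "(Y, {x 1}) \<notin> E ^^ m"
    proof cases
      case 1 then show ?thesis using ne by simp
    next
      case 2
      show ?thesis
      proof
        assume "(Y, {x 1}) \<in> E ^^ m"
        then have "(Y, {x 1}) \<in> E" using 2 by simp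
        from E_from2[OF this Y(1)] s1 show False by blast
      qed
    qed
  qed
  also have "\<dots> \<le> ecc V E Y" using single_V2(1) by (intro ecc_ge) (simp add: V_iff)
  finally show "enat 2 \<le> ecc V E Y" .
qed

lemma ecc_part: assumes Y: "Y \<in> V2" "card Y < n" shows "ecc V E Y = enat 4"
proof (rule antisym)
  from nbr[OF Y(1)] obtain X' where X': "X' \<in> V1" "HB_adj1 X' Y" by blast
  have YX': "(Y,X') \<in> E" using Y(1) X' unfolding E_iff by blast
  show "ecc V E Y \<le> enat 4"
  proof (rule ecc_le)
    fix u assume "u \<in> V"
    then consider "u \<in> V1" | "u \<in> V2" using V_iff by blast
    then show "gdist E Y u \<le> enat 4"
    proof cases
      case 1
      have "(Y,u) \<in> E ^^ 3" unfolding rel3 using YX' XP(1)[OF X'(1)] XP(2)[OF 1] by blast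
      then have "gdist E Y u \<le> enat 3" by (rule gdist_le)
      then show ?thesis by (simp add: order_trans)
    next
      case 2
      from nbr[OF 2] obtain X'' where X'': "X'' \<in> V1" "HB_adj1 X'' u" by blast
      then have "(X'',u) \<in> E" using 2 unfolding E_iff by blast
      then have "(Y,u) \<in> E ^^ 4" unfolding rel4 using YX' XP(1)[OF X'(1)] XP(2)[OF X''(1)] by blast
      then show ?thesis by (rule gdist_le)
    qed
  qed
next
  have Yp: "Y \<in> phi (Bn x n)" using Y(1) by (rule V2_phi)
  note pp = phi_props[OF Yp]
  have Ane: "abs ` Y \<noteq> {}" using pp(2) by simp
  have cA: "card (abs ` Y) < card P" using pp(4) Y(2) card_P by simp
  have k0: "0 < k" "k < card P" using k1 kn card_P by auto
  from choose_B[OF finite_P pp(3) cA Ane k0] obtain B where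
    B: "B \<subseteq> P" "card B = k" "\<not> B \<subseteq> abs ` Y" "\<not> abs ` Y \<subseteq> B" by blast
  from pendant[OF B(1,2)] obtain Y' where Y0: "Y' \<in> V2" "abs ` Y' = B \<and> card Y' = k" by blast
  then have Y': "Y' \<in> V2" "abs ` Y' = B" "card Y' = k" by auto
  have Y'V1: "Y' \<notin> V1" using V2_notV1[OF Y'(1)] .
  have YV1: "Y \<notin> V1" using V2_notV1[OF Y(1)] .
  have "enat 4 \<le> gdist E Y Y'"
  proof (rule gdist_ge)
    fix m :: nat assume "m < 4"
    then consider "m = 0" | "m = 1" | "m = 2" | "m = 3" by linarith
    then show "(Y, Y') \<notin> E ^^ m"
    proof cases
      case 1
      show ?thesis
      proof
        assume "(Y, Y') \<in> E ^^ m"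
        then have "Y = Y'" using 1 by simp
        then show False using Y'(2) B(3) by simp
      qed
    next
      case 2
      show ?thesis
      proof
        assume "(Y, Y') \<in> E ^^ m"
        then have "(Y, Y') \<in> E" using 2 by simp
        from E_from2[OF this Y(1)] Y'V1 show False by blast
      qed
    next
      case 3
      show ?thesis
      proof
        assume "(Y,Y') \<in> E ^^ m"
        then have "(Y,Y') \<in> E ^^ 2" using 3 by simp
        then obtain w where w: "(Y,w) \<in> E" "(w,Y') \<in> E" unfolding rel2 by blast
        have wV1: "w \<in> V1" using E_from2[OF w(1) Y(1)] .
        have a1: "HB_adj1 w Y" using w(1) YV1 unfolding E_iff by blast
        have a2: "HB_adj1 w Y'" using w(2) wV1 Y'V1 unfolding E_iff by blast
        have "w = B" using adj_pendant[OF Y'(1) Y'(3) wV1 a2] Y'(2) by simp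
        then show False using a1 B(3,4) unfolding HB_adj1_def by blast
      qed
    next
      case 4
      show ?thesis
      proof
        assume "(Y,Y') \<in> E ^^ m"
        then have "(Y,Y') \<in> E ^^ 3" using 4 by simp
        then obtain a b where ab: "(Y,a) \<in> E" "(a,b) \<in> E" "(b,Y') \<in> E" unfolding rel3 by blast
        have "a \<in> V1" using E_from2[OF ab(1) Y(1)] .
        then have "b \<in> V2" using E_from1[OF ab(2)] by blast
        then have "Y' \<in> V1" using E_from2[OF ab(3)] by blast
        then show False using Y'V1 by blast
      qed
    qed
  qed
  also have "\<dots> \<le> ecc V E Y" using Y'(1) by (intro ecc_ge) (simp add: V_iff)
  finally show "enat 4 \<le> ecc V E Y" .
qed

end


context hb begin

lemma classify: assumes "v \<in> V"
  shows "(v \<in> V1 \<and> ecc V E v = enat 3) \<or> (v \<in> V2 \<and> card v = n \<and> ecc V E v = enat 2)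
    \<or> (v \<in> V2 \<and> 1 \<le> card v \<and> card v < n \<and> ecc V E v = enat 4)"
proof (cases "v \<in> V1")
  case True then show ?thesis using ecc_V1 by blast
next
  case False
  then have v: "v \<in> V2" using assms by (simp add: V_iff)
  have c: "1 \<le> card v" "card v \<le> n" using card_V2[OF v] by auto
  show ?thesis
  proof (cases "card v = n")
    case True then show ?thesis using ecc_full[OF v True] v by blast
  next
    case False then have "card v < n" using c by simp
    then show ?thesis using ecc_part[OF v] v c by blast
  qed
qed

lemma diam_eq: "diam V E = enat 4"
  unfolding diam_def
proof (rule antisym)
  show "(SUP v\<in>V. ecc V E v) \<le> enat 4"
  proof (rule SUP_least)
    fix v assume "v \<in> V"
    from classify[OF this] show "ecc V E v \<le> enat 4" by auto
  qed
next
  have s: "{x 1} \<in> V" using single_V2(1) by (simp add: V_iff)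
  have "ecc V E {x 1} = enat 4" using ecc_part[OF single_V2(1)] single_V2(2) n2 by simp
  then show "enat 4 \<le> (SUP v\<in>V. ecc V E v)" using SUP_upper[OF s, of "ecc V E"] by simp
qed

lemma rad_eq: "rad V E = enat 2"
  unfolding rad_def
proof (rule antisym)
  have s: "P \<in> V" using N_V2 by (simp add: V_iff)
  have "ecc V E P = enat 2" using ecc_full[OF N_V2 card_P] .
  then show "(INF v\<in>V. ecc V E v) \<le> enat 2" using INF_lower[OF s, of "ecc V E"] by simp
next
  show "enat 2 \<le> (INF v\<in>V. ecc V E v)"
  proof (rule INF_greatest)
    fix v assume "v \<in> V"
    from classify[OF this] show "enat 2 \<le> ecc V E v" by auto
  qed
qed

lemma main:
  shows "(periphery V E = {v \<in> V2. 1 \<le> card v \<and> card v < n}) \<and>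
         (centre V E = {v \<in> V. card v = n}) \<and>
         {v \<in> V. card v = n} \<subseteq> V2"
proof (intro conjI)
  show "periphery V E = {v \<in> V2. 1 \<le> card v \<and> card v < n}"
  proof (rule set_eqI)
    fix v
    show "v \<in> periphery V E \<longleftrightarrow> v \<in> {v \<in> V2. 1 \<le> card v \<and> card v < n}"
    proof
      assume "v \<in> periphery V E"
      then have v: "v \<in> V" "ecc V E v = enat 4" by (auto simp: periphery_def diam_eq)
      from classify[OF v(1)] v(2) show "v \<in> {v \<in> V2. 1 \<le> card v \<and> card v < n}" by auto
    next
      assume "v \<in> {v \<in> V2. 1 \<le> card v \<and> card v < n}"
      then have v: "v \<in> V2" "card v < n" by auto
      then have "v \<in> V" by (simp add: V_iff)
      then show "v \<in> periphery V E" using ecc_part[OF v] by (simp add: periphery_def diam_eq)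
    qed
  qed
  show "centre V E = {v \<in> V. card v = n}"
  proof (rule set_eqI)
    fix v
    show "v \<in> centre V E \<longleftrightarrow> v \<in> {v \<in> V. card v = n}"
    proof
      assume "v \<in> centre V E"
      then have v: "v \<in> V" "ecc V E v = enat 2" by (auto simp: centre_def rad_eq)
      from classify[OF v(1)] v(2) have "card v = n" by auto
      then show "v \<in> {v \<in> V. card v = n}" using v(1) by simp
    next
      assume "v \<in> {v \<in> V. card v = n}"
      then have v: "v \<in> V" "card v = n" by auto
      have "v \<notin> V1" using v(2) kn V1_props(3) by force
      then have "v \<in> V2" using v(1) by (simp add: V_iff)
      then have "ecc V E v = enat 2" using ecc_full v(2) by blast
      then show "v \<in> centre V E" using v(1) by (simp add: centre_def rad_eq)
    qed
  qed
  show "{v \<in> V. card v = n} \<subseteq> V2"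
  proof
    fix v assume "v \<in> {v \<in> V. card v = n}"
    then have v: "v \<in> V" "card v = n" by auto
    have "v \<notin> V1" using v(2) kn V1_props(3) by force
    then show "v \<in> V2" using v(1) by (simp add: V_iff)
  qed
qed

end

theorem mainTheorem14:
  fixes x :: "nat \<Rightarrow> real" and n k :: nat
  assumes "n > 2" and "1 < k" and "k < n"
    and "\<And>i. 1 \<le> i \<Longrightarrow> i \<le> n \<Longrightarrow> x i > 0"
    and "strict_mono_on {1..n} x"
  shows "(periphery (HB_V x n k) (HB_E x n k) =
           {v \<in> HB_V2 x n k. 1 \<le> card v \<and> card v < n}) \<and>
         (centre (HB_V x n k) (HB_E x n k) = {v \<in> HB_V x n k. card v = n}) \<and>
         {v \<in> HB_V x n k. card v = n} \<subseteq> HB_V2 x n k"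
proof -
  interpret hb x n k using assms by unfold_locales auto
  show ?thesis by (rule main)
qed


end
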